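(* Let $N\ge2$ be an integer, $R>0$, and let $f$ satisfy (A1) and (A3) with $\delta=0$. Let $k\in\mathbb{N}$, $\nu\in\{+,-\}$ and $\hat\lambda\in(0,\infty)$ be given. Then there exists $\hat b>0$ such that for every $n\in\mathbb{N}$ with $1/n<R$ and every solution $u\in S^\nu_{k,0}$ of problem $(4.6)_n$ with $\lambda=\hat\lambda$, one has $\|u\|_{C[0,R]}\ge\hat b$; here $\hat b$ is independent of $n$ and $u$.
   Context: $\phi_1(s)=s/\sqrt{1-s^2}$ for $s\in(-1,1)$. (A1) $f:[0,R]\times(-\alpha,\alpha)\to\mathbb{R}$ is continuous, $R<\alpha\le\infty$, and $f(r,s)s>0$ for $r\in[0,R]$, $s\in(-\alpha,0)\cup(0,\alpha)$. (A3) with $\delta=0$: $f(r,0)\equiv0$ and $\lim_{s\to0}f(r,s)/\phi_1(s)=\infty$ uniformly in $r\in[0,R]$. For $n\in\mathbb{N}$ define $g_n(r,s)=0$ for $r\in[0,1/n]$, $s\in(-\alpha,\alpha)$, and $g_n(r,s)=f(r-1/n,s)$ for $r\in(1/n,R]$, $s\in(-\alpha,\alpha)$. Problem $(4.6)_n$: $-(r^{N-1}\phi_1(u'))'=\lambda r^{N-1}g_n(r,u)$ on $(0,R)$, $u'(0)=0=u(R)$, where a solution is $u\in C^1[0,R]$ with $|u'|<1$ on $[0,R]$ satisfying the equation (equivalently, $r^{N-1}\phi_1(u'(r))=-\lambda\int_0^r t^{N-1}g_n(t,u(t))\,dt$ on $[0,R]$) and the boundary conditions. $E_0=\{u\in C^1[0,R]:u'(0)=u(R)=0\}$;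 $S^+_{k,0}$ is the set of $u\in E_0$ with exactly $k-1$ zeros in $(0,R)$, all simple, and positive on $(0,\sigma)$ for some $\sigma>0$; $S^-_{k,0}=-S^+_{k,0}$. *)

theory Defs
  imports "HOL-Analysis.Analysis"
begin

definition phi1 :: "real \<Rightarrow> real" where
  "phi1 s = s / sqrt (1 - s\<^sup>2)"

definition A1 :: "real \<Rightarrow> ereal \<Rightarrow> (real \<Rightarrow> real \<Rightarrow> real) \<Rightarrow> bool" where
  "A1 R alpha f \<longleftrightarrow>
     ereal R < alpha \<and>
     continuous_on ({0..R} \<times> {s. ereal \<bar>s\<bar> < alpha}) (\<lambda>(r, s). f r s) \<and>
     (\<forall>r\<in>{0..R}. \<forall>s. ereal \<bar>s\<bar> < alpha \<and> s \<noteq> 0 \<longrightarrow> f r s * s > 0)"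

definition A3_0 :: "real \<Rightarrow> (real \<Rightarrow> real \<Rightarrow> real) \<Rightarrow> bool" where
  "A3_0 R f \<longleftrightarrow>
     (\<forall>r\<in>{0..R}. f r 0 = 0) \<and>
     (\<forall>M. \<exists>e>0. \<forall>r\<in>{0..R}. \<forall>s. 0 < \<bar>s\<bar> \<and> \<bar>s\<bar> < e \<longrightarrow> f r s / phi1 s \<ge> M)"

definition gn :: "(real \<Rightarrow> real \<Rightarrow> real) \<Rightarrow> nat \<Rightarrow> real \<Rightarrow> real \<Rightarrow> real" where
  "gn f n r s = (if r \<le> 1 / real n then 0 else f (r - 1 / real n) s)"

definition C1_with :: "real \<Rightarrow> (real \<Rightarrow> real) \<Rightarrow> (real \<Rightarrow> real) \<Rightarrow> bool" where
  "C1_with R u u' \<longleftrightarrow>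
     (\<forall>x\<in>{0..R}. (u has_real_derivative u' x) (at x within {0..R})) \<and>
     continuous_on {0..R} u'"

definition E0 :: "real \<Rightarrow> (real \<Rightarrow> real) \<Rightarrow> (real \<Rightarrow> real) \<Rightarrow> bool" where
  "E0 R u u' \<longleftrightarrow> C1_with R u u' \<and> u' 0 = 0 \<and> u R = 0"

definition S_plus :: "real \<Rightarrow> nat \<Rightarrow> (real \<Rightarrow> real) \<Rightarrow> (real \<Rightarrow> real) \<Rightarrow> bool" where
  "S_plus R k u u' \<longleftrightarrow>
     E0 R u u' \<and>
     finite {x\<in>{0<..<R}. u x = 0} \<and>
     card {x\<in>{0<..<R}. u x = 0} = k - 1 \<and>
     (\<forall>x\<in>{0<..<R}. u x = 0 \<longrightarrow> u' x \<noteq> 0) \<and>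
     (\<exists>\<sigma>>0. \<forall>x\<in>{0<..<\<sigma>}. u x > 0)"

text \<open>u in S^nu_{k,0} for nu = 1 (i.e. +) or nu = -1 (i.e. -); S^- = - S^+.\<close>
definition S_nu :: "real \<Rightarrow> nat \<Rightarrow> real \<Rightarrow> (real \<Rightarrow> real) \<Rightarrow> (real \<Rightarrow> real) \<Rightarrow> bool" where
  "S_nu R k nu u u' \<longleftrightarrow> S_plus R k (\<lambda>x. nu * u x) (\<lambda>x. nu * u' x)"

definition sol46 :: "nat \<Rightarrow> real \<Rightarrow> (real \<Rightarrow> real \<Rightarrow> real) \<Rightarrow> nat \<Rightarrow> real
                      \<Rightarrow> (real \<Rightarrow> real) \<Rightarrow> (real \<Rightarrow> real) \<Rightarrow> bool" where
  "sol46 N R f n lam u u' \<longleftrightarrow>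
     C1_with R u u' \<and>
     (\<forall>r\<in>{0..R}. \<bar>u' r\<bar> < 1) \<and>
     (\<forall>r\<in>{0..R}. r ^ (N - 1) * phi1 (u' r) =
          - lam * integral {0..r} (\<lambda>t. t ^ (N - 1) * gn f n t (u t))) \<and>
     u' 0 = 0 \<and> u R = 0"

end

theory Submission
  imports Defs
begin


lemma mvt_real:
  fixes u u' :: "real \<Rightarrow> real"
  assumes "x \<le> y" "\<forall>z\<in>{x..y}. (u has_real_derivative u' z) (at z within {x..y})"
  shows "\<exists>z\<in>{x..y}. u y - u x = (y - x) * u' z"
proof -
  have "\<exists>z\<in>{x..y}. u y - u x = (\<lambda>h. u' z * h) (y - x)"
    by (rule mvt_very_simple) (use assms in \<open>auto simp: has_field_derivative_def\<close>)
  thus ?thesis by (auto simp: mult.commute)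
qed

lemma phi1_pos: "0 < s \<Longrightarrow> s < 1 \<Longrightarrow> phi1 s > 0"
proof -
  assume a: "0 < s" "s < 1"
  have "1 - s\<^sup>2 > 0" using a by (simp add: abs_square_less_1)
  thus ?thesis unfolding phi1_def using a by simp
qed

lemma phi1_neg: "s < 0 \<Longrightarrow> s > -1 \<Longrightarrow> phi1 s < 0"
proof -
  assume a: "s < 0" "s > -1"
  have "1 - s\<^sup>2 > 0" using a by (simp add: abs_square_less_1)
  thus ?thesis unfolding phi1_def using a by (simp add: divide_neg_pos)
qed

lemma phi1_ge_id: "0 \<le> s \<Longrightarrow> s < 1 \<Longrightarrow> phi1 s \<ge> s"
proof -
  assume a: "0 \<le> s" "s < 1"
  have p: "1 - s\<^sup>2 > 0" using a by (simp add: abs_square_less_1)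
  have "sqrt (1 - s\<^sup>2) \<le> 1" using a by simp
  hence "s * sqrt (1 - s\<^sup>2) \<le> s" using a by (simp add: mult_left_le)
  thus ?thesis unfolding phi1_def using p by (simp add: le_divide_eq)
qed

lemma phi1_minus: "phi1 (- s) = - phi1 s"
  unfolding phi1_def by simp

lemma phi1_le_neg:
  assumes "\<bar>s\<bar> < 1" "K > 0" "phi1 s \<le> - K"
  shows "s \<le> - min K 1 / 2"
proof (rule ccontr)
  assume "\<not> ?thesis"
  hence s: "s > - min K 1 / 2" by simp
  show False
  proof (cases "s \<ge> 0")
    case True
    hence "phi1 s \<ge> 0" using phi1_ge_id[of s] assms by auto
    thus False using assms by simp
  next
    case False
    have m: "min K 1 \<le> 1" by simp
    have "-s \<le> 1/2" using s m by linarith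
    hence "(-s)^2 \<le> (1/2)^2" using False by (intro power_mono) auto
    hence s2: "s\<^sup>2 \<le> 1/4" by (simp add: power2_eq_square)
    have "(1/2)^2 \<le> 1 - s\<^sup>2" using s2 by (simp add: power2_eq_square)
    hence h: "1/2 \<le> sqrt (1 - s\<^sup>2)" by (rule real_le_rsqrt)
    have sq: "sqrt (1 - s\<^sup>2) > 0" using h by linarith
    have "s * (2 * sqrt (1 - s\<^sup>2)) \<le> s * 1"
      using False h by (intro mult_left_mono_neg) auto
    hence "2 * s * sqrt (1 - s\<^sup>2) \<le> s" by (simp add: algebra_simps)
    hence "phi1 s \<ge> 2 * s" unfolding phi1_def using sq by (simp add: le_divide_eq)
    moreover have "2 * s > - min K 1" using s by linarith
    moreover have "min K 1 \<le> K" by simp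
    ultimately show False using assms(3) by linarith
  qed
qed

lemma phi1_ge_pos:
  assumes "\<bar>s\<bar> < 1" "K > 0" "phi1 s \<ge> K"
  shows "s \<ge> min K 1 / 2"
proof -
  have "phi1 (-s) \<le> -K" using assms phi1_minus[of s] by simp
  from phi1_le_neg[OF _ assms(2) this] assms(1) show ?thesis by simp
qed

lemma der_sub:
  fixes u u' :: "real \<Rightarrow> real"
  assumes "\<forall>r\<in>{a..b}. (u has_real_derivative u' r) (at r within {a..b})" "a \<le> x" "y \<le> b"
  shows "\<forall>z\<in>{x..y}. (u has_real_derivative u' z) (at z within {x..y})"
proof
  fix z assume z: "z \<in> {x..y}"
  hence "z \<in> {a..b}" using assms by auto
  hence "(u has_real_derivative u' z) (at z within {a..b})" using assms(1) by blast
  thus "(u has_real_derivative u' z) (at z within {x..y})"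
    by (rule DERIV_subset) (use assms in auto)
qed



lemma core_dec:
  fixes u u' w \<rho> :: "real \<Rightarrow> real"
  assumes ab: "a < b"
    and der: "\<forall>r\<in>{a..b}. (u has_real_derivative u' r) (at r within {a..b})"
    and rho: "\<forall>r\<in>{a..b}. 0 < \<rho> r \<and> \<rho> r \<le> \<rho>1"
    and wdef: "\<forall>r\<in>{a..b}. w r = \<rho> r * phi1 (u' r)"
    and u'b: "\<forall>r\<in>{a..b}. \<bar>u' r\<bar> < 1"
    and ub: "\<forall>r\<in>{a..b}. 0 < u r \<and> u r \<le> m"
    and H1: "\<forall>x y c. a \<le> x \<and> x \<le> y \<and> y \<le> b \<and> 0 \<le> c \<and> (\<forall>t\<in>{x..y}. c \<le> u t)
              \<longrightarrow> w y \<le> w x - L * (y - x) * c"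
    and wa: "w a \<le> 0" and m: "m < (b - a) / 4" and L: "L * (b - a)^2 > 8 * \<rho>1"
  shows False
proof -
  have "0 < \<rho> a \<and> \<rho> a \<le> \<rho>1" using rho ab by simp
  hence r1: "\<rho>1 > 0" by linarith
  have Lp: "L > 0"
  proof (rule ccontr)
    assume "\<not> L > 0"
    hence "L * (b - a)^2 \<le> 0" by (simp add: mult_nonpos_nonneg)
    thus False using L r1 by linarith
  qed
  have wle: "w r \<le> w x" if "a \<le> x" "x \<le> r" "r \<le> b" for x r
  proof -
    have "\<forall>t\<in>{x..r}. 0 \<le> u t"
    proof
      fix t assume "t \<in> {x..r}"
      hence "t \<in> {a..b}" using that by auto
      thus "0 \<le> u t" using ub by (simp add: less_imp_le)
    qed
    thus ?thesis using H1[rule_format, of x r 0] that by auto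
  qed
  have u'le: "u' r \<le> 0" if "r \<in> {a..b}" for r
  proof (rule ccontr)
    assume "\<not> u' r \<le> 0"
    hence "phi1 (u' r) > 0" using phi1_pos u'b that by (simp add: abs_less_iff)
    hence "w r > 0" using wdef rho that by simp
    moreover have "w r \<le> w a" using wle that by auto
    ultimately show False using wa by simp
  qed
  have udec: "u y \<le> u x" if "a \<le> x" "x \<le> y" "y \<le> b" for x y
  proof -
    have "\<forall>z\<in>{x..y}. (u has_real_derivative u' z) (at z within {x..y})"
      using der_sub[OF der, of x y] that by auto
    from mvt_real[OF that(2) this] obtain z where "z \<in> {x..y}" "u y - u x = (y - x) * u' z" by auto
    moreover have "u' z \<le> 0" using u'le \<open>z \<in> {x..y}\<close> that by auto
    moreover have "y - x \<ge> 0" using that by simp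
    ultimately show ?thesis using mult_nonneg_nonpos[of "y - x" "u' z"] by linarith
  qed
  define q where "q = (a + b) / 2"
  define c where "c = u q"
  have q: "a < q" "q < b" using ab by (auto simp: q_def)
  have cpos: "c > 0" "c \<le> m" using ub q by (auto simp: c_def)
  have "w q \<le> w a - L * (q - a) * c"
    using H1[rule_format, of a q c] q cpos udec by (auto simp: c_def)
  hence wq: "w q \<le> - (L * (q - a) * c)" using wa by simp
  define K where "K = L * (q - a) * c / \<rho>1"
  have Kp: "K > 0" using Lp q cpos r1 by (simp add: K_def)
  have phiK: "phi1 (u' r) \<le> - K" if "r \<in> {q..b}" for r
  proof -
    have r: "r \<in> {a..b}" using that q by auto
    have "w r \<le> - (L * (q - a) * c)" using wle[of q r] that q wq by auto
    hence "\<rho> r * phi1 (u' r) \<le> - (\<rho>1 * K)" using wdef r r1 by (simp add: K_def)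
    moreover have "\<rho>1 * K \<ge> \<rho> r * K" using rho r Kp by (simp add: mult_right_mono)
    ultimately have "\<rho> r * phi1 (u' r) \<le> \<rho> r * (- K)" by simp
    moreover have pr: "\<rho> r > 0" using rho r by auto
    ultimately show "phi1 (u' r) \<le> - K" using mult_le_cancel_left_pos[OF pr, of "phi1 (u' r)" "-K"] by simp
  qed
  have u'neg: "u' r \<le> - min K 1 / 2" if "r \<in> {q..b}" for r
  proof -
    have r: "r \<in> {a..b}" using that q by auto
    show ?thesis using phi1_le_neg[OF _ Kp] u'b r phiK[OF that] by blast
  qed
  have "\<forall>z\<in>{q..b}. (u has_real_derivative u' z) (at z within {q..b})"
    using der_sub[OF der] q by auto
  from mvt_real[OF _ this] q obtain z where z: "z \<in> {q..b}" "u b - u q = (b - q) * u' z" by auto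
  have "(b - q) * u' z \<le> (b - q) * (- min K 1 / 2)"
    using u'neg[OF z(1)] q by (intro mult_left_mono) auto
  moreover have "u b > 0" using ub ab by auto
  ultimately have key: "c > (b - q) * (min K 1 / 2)" using z by (simp add: c_def)
  have bq: "b - q = (b - a) / 2" "q - a = (b - a) / 2" unfolding q_def by (simp_all add: field_simps)
  show False
  proof (cases "K \<ge> 1")
    case True
    thus False using key bq cpos m by simp
  next
    case False
    hence "c > (b - a) / 2 * (K / 2)" using key bq by simp
    also have "(b - a) / 2 * (K / 2) = c * (L * (b - a)^2 / (8 * \<rho>1))"
    proof -
      have Kb: "K = L * ((b - a) / 2) * c / \<rho>1" by (simp only: K_def bq)
      show ?thesis using r1 by (simp add: Kb power2_eq_square field_simps)
    qed
    finally have cc: "c * 1 > c * (L * (b - a)^2 / (8 * \<rho>1))" by simp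
    have "1 > L * (b - a)^2 / (8 * \<rho>1)" using mult_left_less_imp_less[OF cc] cpos by linarith
    thus False using L r1 by (simp add: divide_less_eq)
  qed
qed

lemma core_inc:
  fixes u u' w \<rho> :: "real \<Rightarrow> real"
  assumes ab: "a < b"
    and der: "\<forall>r\<in>{a..b}. (u has_real_derivative u' r) (at r within {a..b})"
    and rho: "\<forall>r\<in>{a..b}. 0 < \<rho> r \<and> \<rho> r \<le> \<rho>1"
    and wdef: "\<forall>r\<in>{a..b}. w r = \<rho> r * phi1 (u' r)"
    and u'b: "\<forall>r\<in>{a..b}. \<bar>u' r\<bar> < 1"
    and ub: "\<forall>r\<in>{a..b}. 0 < u r \<and> u r \<le> m"
    and H1: "\<forall>x y c. a \<le> x \<and> x \<le> y \<and> y \<le> b \<and> 0 \<le> c \<and> (\<forall>t\<in>{x..y}. c \<le> u t)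
              \<longrightarrow> w y \<le> w x - L * (y - x) * c"
    and wb: "w b \<ge> 0" and m: "m < (b - a) / 4" and L: "L * (b - a)^2 > 8 * \<rho>1"
  shows False
proof -
  have "0 < \<rho> a \<and> \<rho> a \<le> \<rho>1" using rho ab by simp
  hence r1: "\<rho>1 > 0" by linarith
  have Lp: "L > 0"
  proof (rule ccontr)
    assume "\<not> L > 0"
    hence "L * (b - a)^2 \<le> 0" by (simp add: mult_nonpos_nonneg)
    thus False using L r1 by linarith
  qed
  have wle: "w r \<le> w x" if "a \<le> x" "x \<le> r" "r \<le> b" for x r
  proof -
    have "\<forall>t\<in>{x..r}. 0 \<le> u t"
    proof
      fix t assume "t \<in> {x..r}"
      hence "t \<in> {a..b}" using that by auto
      thus "0 \<le> u t" using ub by (simp add: less_imp_le)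
    qed
    thus ?thesis using H1[rule_format, of x r 0] that by auto
  qed
  have u'ge: "u' r \<ge> 0" if "r \<in> {a..b}" for r
  proof (rule ccontr)
    assume "\<not> u' r \<ge> 0"
    hence "phi1 (u' r) < 0" using phi1_neg u'b that by (simp add: abs_less_iff)
    hence "w r < 0" using wdef rho that by (simp add: mult_pos_neg)
    moreover have "w b \<le> w r" using wle that by auto
    ultimately show False using wb by simp
  qed
  have uinc: "u x \<le> u y" if "a \<le> x" "x \<le> y" "y \<le> b" for x y
  proof -
    have "\<forall>z\<in>{x..y}. (u has_real_derivative u' z) (at z within {x..y})"
      using der_sub[OF der, of x y] that by auto
    from mvt_real[OF that(2) this] obtain z where "z \<in> {x..y}" "u y - u x = (y - x) * u' z" by auto
    moreover have "u' z \<ge> 0" using u'ge \<open>z \<in> {x..y}\<close> that by auto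
    moreover have "y - x \<ge> 0" using that by simp
    ultimately show ?thesis using mult_nonneg_nonneg[of "y - x" "u' z"] by linarith
  qed
  define q where "q = (a + b) / 2"
  define c where "c = u q"
  have q: "a < q" "q < b" using ab by (auto simp: q_def)
  have cpos: "c > 0" "c \<le> m" using ub q by (auto simp: c_def)
  have "w b \<le> w q - L * (b - q) * c"
    using H1[rule_format, of q b c] q cpos uinc by (auto simp: c_def)
  hence wq: "w q \<ge> L * (b - q) * c" using wb by simp
  define K where "K = L * (b - q) * c / \<rho>1"
  have Kp: "K > 0" using Lp q cpos r1 by (simp add: K_def)
  have u'pos: "u' r \<ge> min K 1 / 2" if "r \<in> {a..q}" for r
  proof -
    have r: "r \<in> {a..b}" using that q by auto
    have "w r \<ge> L * (b - q) * c" using wle[of r q] that q wq by auto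
    hence "\<rho> r * phi1 (u' r) \<ge> \<rho>1 * K" using wdef r r1 by (simp add: K_def)
    moreover have "\<rho>1 * K \<ge> \<rho> r * K" using rho r Kp by (simp add: mult_right_mono)
    ultimately have "\<rho> r * phi1 (u' r) \<ge> \<rho> r * K" by simp
    hence "phi1 (u' r) \<ge> K" using rho r by (simp add: mult_le_cancel_left_pos)
    thus ?thesis using phi1_ge_pos[OF _ Kp] u'b r by blast
  qed
  have "\<forall>z\<in>{a..q}. (u has_real_derivative u' z) (at z within {a..q})"
    using der_sub[OF der] q by auto
  from mvt_real[OF _ this] q obtain z where z: "z \<in> {a..q}" "u q - u a = (q - a) * u' z" by auto
  have "(q - a) * u' z \<ge> (q - a) * (min K 1 / 2)"
    using u'pos[OF z(1)] q by (intro mult_left_mono) auto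
  moreover have "u a > 0" using ub ab by auto
  ultimately have key: "c > (q - a) * (min K 1 / 2)" using z by (simp add: c_def)
  have bq: "b - q = (b - a) / 2" "q - a = (b - a) / 2" unfolding q_def by (simp_all add: field_simps)
  show False
  proof (cases "K \<ge> 1")
    case True
    thus False using key bq cpos m by simp
  next
    case False
    hence "c > (b - a) / 2 * (K / 2)" using key bq by simp
    also have "(b - a) / 2 * (K / 2) = c * (L * (b - a)^2 / (8 * \<rho>1))"
    proof -
      have Kb: "K = L * ((b - a) / 2) * c / \<rho>1" by (simp only: K_def bq)
      show ?thesis using r1 by (simp add: Kb power2_eq_square field_simps)
    qed
    finally have cc: "c * 1 > c * (L * (b - a)^2 / (8 * \<rho>1))" by simp
    have "1 > L * (b - a)^2 / (8 * \<rho>1)" using mult_left_less_imp_less[OF cc] cpos by linarith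
    thus False using L r1 by (simp add: divide_less_eq)
  qed
qed



lemma pigeon_interval:
  fixes Z :: "real set"
  assumes "finite Z" "card Z = k - 1" "k \<ge> 1" "\<delta> > 0"
  shows "\<exists>j<k. \<forall>t\<in>{a0 + real j * \<delta> <..< a0 + (real j + 1) * \<delta>}. t \<notin> Z"
proof (rule ccontr)
  assume "\<not> ?thesis"
  hence "\<forall>j\<in>{..<k}. \<exists>t. t \<in> {a0 + real j * \<delta> <..< a0 + (real j + 1) * \<delta>} \<and> t \<in> Z" by (metis lessThan_iff)
  then obtain g where g: "\<forall>j\<in>{..<k}. g j \<in> {a0 + real j * \<delta> <..< a0 + (real j + 1) * \<delta>} \<and> g j \<in> Z"
    by metis
  have inj: "inj_on g {..<k}"
  proof (rule inj_onI)
    fix i j assume ij: "i \<in> {..<k}" "j \<in> {..<k}" "g i = g j"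
    show "i = j"
    proof (rule ccontr)
      assume "i \<noteq> j"
      hence "i < j \<or> j < i" by auto
      thus False
      proof
        assume "i < j"
        hence "real i + 1 \<le> real j" by simp
        hence "(real i + 1) * \<delta> \<le> real j * \<delta>" using assms(4) by (simp add: mult_right_mono)
        moreover have "g i < a0 + (real i + 1) * \<delta>" "a0 + real j * \<delta> < g j" using g ij(1,2) by auto
        ultimately show False using ij(3) by linarith
      next
        assume "j < i"
        hence "real j + 1 \<le> real i" by simp
        hence "(real j + 1) * \<delta> \<le> real i * \<delta>" using assms(4) by (simp add: mult_right_mono)
        moreover have "g j < a0 + (real j + 1) * \<delta>" "a0 + real i * \<delta> < g i" using g ij(1,2) by auto
        ultimately show False using ij(3) by linarith
      qed
    qed
  qed
  have "g ` {..<k} \<subseteq> Z" using g by auto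
  hence "card (g ` {..<k}) \<le> card Z" using assms(1) by (rule card_mono[rotated])
  hence "k \<le> k - 1" using card_image[OF inj] assms(2) by simp
  thus False using assms(3) by simp
qed

lemma sign_const:
  fixes u :: "real \<Rightarrow> real"
  assumes "continuous_on {a..b} u" "a \<le> b" "\<forall>t\<in>{a..b}. u t \<noteq> 0"
  shows "\<exists>s\<in>{1,-1::real}. \<forall>t\<in>{a..b}. s * u t > 0"
proof (cases "u a > 0")
  case True
  have "\<forall>t\<in>{a..b}. u t > 0"
  proof (rule ballI, rule ccontr)
    fix t assume t: "t \<in> {a..b}" "\<not> u t > 0"
    hence "u t \<le> 0" by simp
    have "continuous_on {a..t} u" using assms(1) t by (auto intro: continuous_on_subset)
    from IVT2'[of u t 0 a, OF \<open>u t \<le> 0\<close> _ _ this] True t obtain x where "a \<le> x" "x \<le> t" "u x = 0" by auto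
    thus False using assms(3) t by auto
  qed
  thus ?thesis by (intro bexI[of _ 1]) auto
next
  case False
  have "u a \<noteq> 0" using assms(2,3) by simp
  hence ua: "u a < 0" using False by linarith
  have "\<forall>t\<in>{a..b}. u t < 0"
  proof (rule ballI, rule ccontr)
    fix t assume t: "t \<in> {a..b}" "\<not> u t < 0"
    hence "u t \<ge> 0" by simp
    have "continuous_on {a..t} u" using assms(1) t by (auto intro: continuous_on_subset)
    from IVT'[of u a 0 t, OF _ \<open>u t \<ge> 0\<close> _ this] ua t obtain x where "a \<le> x" "x \<le> t" "u x = 0" by auto
    thus False using assms(3) t by auto
  qed
  thus ?thesis by (intro bexI[of _ "-1"]) auto
qed



lemma sub_le: "0 \<le> (x::real) \<Longrightarrow> t \<le> R \<Longrightarrow> t - x \<le> R" by simp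

theorem lemma4p2:
  fixes N :: nat and R :: real and alpha :: ereal and f :: "real \<Rightarrow> real \<Rightarrow> real"
    and k :: nat and nu :: real and lam :: real
  assumes "N \<ge> 2" and "R > 0"
    and "A1 R alpha f" and "A3_0 R f"
    and "k \<ge> 1" and "nu \<in> {1, -1}" and "lam > 0"
  shows "\<exists>b>0. \<forall>n u u'. n \<ge> 1 \<and> 1 / real n < R \<and> sol46 N R f n lam u u' \<and> S_nu R k nu u u'
            \<longrightarrow> (SUP x\<in>{0..R}. \<bar>u x\<bar>) \<ge> b"
proof -
  note R = \<open>R > 0\<close> and lam = \<open>lam > 0\<close> and k = \<open>k \<ge> 1\<close>
  from assms(3) have aR: "ereal R < alpha"
    and fcont: "continuous_on ({0..R} \<times> {s. ereal \<bar>s\<bar> < alpha}) (\<lambda>(r, s). f r s)"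
    unfolding A1_def by auto
  from assms(4) have f0: "\<forall>r\<in>{0..R}. f r 0 = 0"
    and fM: "\<forall>M. \<exists>e>0. \<forall>r\<in>{0..R}. \<forall>s. 0 < \<bar>s\<bar> \<and> \<bar>s\<bar> < e \<longrightarrow> f r s / phi1 s \<ge> M"
    unfolding A3_0_def by auto
  define n0 :: nat where "n0 = nat \<lfloor>1 / R\<rfloor> + 1"
  have fl: "real_of_int \<lfloor>1 / R\<rfloor> \<ge> 0" using R by simp
  have n0r: "real n0 = real_of_int \<lfloor>1 / R\<rfloor> + 1" using fl unfolding n0_def by simp
  have n0pos: "real n0 > 0" using n0r fl by linarith
  have "1 / R < real n0" using n0r by linarith
  hence "1 < real n0 * R" using R by (simp add: divide_less_eq)
  hence n0R: "1 / real n0 < R" using n0pos by (simp add: divide_less_eq mult.commute)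
  have n0le: "1 / real n \<le> 1 / real n0" if "n \<ge> 1" "1 / real n < R" for n :: nat
  proof -
    have np: "real n > 0" using that by simp
    have "1 < R * real n" using that(2) np by (simp add: divide_less_eq)
    hence "1 / R < real n" using R by (simp add: divide_less_eq mult.commute)
    hence "\<lfloor>1 / R\<rfloor> < int n" by linarith
    hence "real n0 \<le> real n" using n0r by linarith
    thus ?thesis using n0pos by (simp add: frac_le)
  qed
  define a0 where "a0 = (1 / real n0 + R) / 2"
  have "1 / real n0 > 0" using n0pos by simp
  note hh = this
  have gen: "\<And>x y::real. 0 < x \<Longrightarrow> x < y \<Longrightarrow> x < (x + y) / 2 \<and> (x + y) / 2 < y \<and> 0 < (x + y) / 2"
    by auto
  have a01: "1 / real n0 < a0" using gen[OF hh n0R] unfolding a0_def by blast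
  have a02: "a0 < R" using gen[OF hh n0R] unfolding a0_def by blast
  have a03: "a0 > 0" using gen[OF hh n0R] unfolding a0_def by blast
  note a0 = a01 a02 a03
  define \<delta> where "\<delta> = (R - a0) / real k"
  have \<delta>: "\<delta> > 0" using a0 k by (simp add: \<delta>_def)
  have kd: "a0 + real k * \<delta> = R" using k by (simp add: \<delta>_def)
  define ll where "ll = \<delta> / 4"
  have ll: "ll > 0" using \<delta> by (simp add: ll_def)
  define \<rho>0 where "\<rho>0 = a0 ^ (N - 1)"
  define \<rho>1 where "\<rho>1 = R ^ (N - 1)"
  have \<rho>: "\<rho>0 > 0" "\<rho>1 > 0" using a0 R by (auto simp: \<rho>0_def \<rho>1_def)
  define M where "M = 8 * \<rho>1 / (ll^2 * lam * \<rho>0) + 1"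
  have "8 * \<rho>1 / (ll^2 * lam * \<rho>0) > 0" using \<rho> ll lam by simp
  hence Mpos: "M > 0" unfolding M_def by linarith
  define L where "L = lam * \<rho>0 * M"
  have LL: "L * ll^2 > 8 * \<rho>1"
  proof -
    have "L * ll^2 = 8 * \<rho>1 + lam * \<rho>0 * ll^2" using \<rho> ll lam
      by (simp add: L_def M_def field_simps)
    thus ?thesis using \<rho> ll lam by simp
  qed
  from fM obtain e where e: "e > 0" "\<forall>r\<in>{0..R}. \<forall>s. 0 < \<bar>s\<bar> \<and> \<bar>s\<bar> < e \<longrightarrow> f r s / phi1 s \<ge> M"
    by blast
  define b where "b = min (min e (ll / 4)) (min (1/2) R) / 2"
  have b: "b > 0" "b < e" "b < ll / 4" "b < 1/2" "b < R" using e ll R by (auto simp: b_def)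
  show ?thesis
  proof (intro exI[of _ b] conjI allI impI)
    show "b > 0" by (fact b(1))
    fix n u u'
    assume H: "1 \<le> n \<and> 1 / real n < R \<and> sol46 N R f n lam u u' \<and> S_nu R k nu u u'"
    show "b \<le> (SUP x\<in>{0..R}. \<bar>u x\<bar>)"
    proof (rule ccontr)
      assume "\<not> ?thesis"
      hence SUPb: "(SUP x\<in>{0..R}. \<bar>u x\<bar>) < b" by simp
      from H have n1: "n \<ge> 1" and nR: "1 / real n < R" and sol: "sol46 N R f n lam u u'"
        and Snu: "S_nu R k nu u u'" by auto
      have der: "\<forall>x\<in>{0..R}. (u has_real_derivative u' x) (at x within {0..R})"
        and u'1: "\<forall>r\<in>{0..R}. \<bar>u' r\<bar> < 1"
        and eq: "\<forall>r\<in>{0..R}. r ^ (N - 1) * phi1 (u' r) =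
          - lam * integral {0..r} (\<lambda>t. t ^ (N - 1) * gn f n t (u t))"
        using sol unfolding sol46_def C1_with_def by auto
      define h where "h = (\<lambda>t. t ^ (N - 1) * gn f n t (u t))"
      have ucont: "continuous_on {0..R} u" using der by (intro DERIV_continuous_on) auto
      have bdd: "bdd_above ((\<lambda>x. \<bar>u x\<bar>) ` {0..R})"
        by (intro bounded_imp_bdd_above compact_imp_bounded compact_continuous_image
            continuous_on_rabs ucont compact_Icc)
      have absu: "\<bar>u t\<bar> < b" if "t \<in> {0..R}" for t
        using cSUP_upper[OF that bdd] SUPb by simp
      have nu0: "nu \<noteq> 0" using assms(6) by auto
      have Zeq: "{x\<in>{0<..<R}. nu * u x = 0} = {x\<in>{0<..<R}. u x = 0}" using nu0 by auto
      have Zfin: "finite {x\<in>{0<..<R}. u x = 0}" and Zcard: "card {x\<in>{0<..<R}. u x = 0} = k - 1"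
        using Snu Zeq unfolding S_nu_def S_plus_def by auto
      have nle: "1 / real n < a0" using n0le[OF n1 nR] a0 by simp
      have npos: "1 / real n \<ge> 0" by simp
      obtain j where j: "j < k" "\<forall>t\<in>{a0 + real j * \<delta> <..< a0 + (real j + 1) * \<delta>}.
          t \<notin> {x\<in>{0<..<R}. u x = 0}"
        using pigeon_interval[OF Zfin Zcard k \<delta>] by blast
      define a where "a = a0 + real j * \<delta>"
      have "real j + 1 \<le> real k" using j by simp
      hence "(real j + 1) * \<delta> \<le> real k * \<delta>" using \<delta> by (simp add: mult_right_mono)
      hence aR': "a + \<delta> \<le> R" using kd by (simp add: a_def algebra_simps)
      have aa0: "a \<ge> a0" using \<delta> by (simp add: a_def)
      define a1 where "a1 = a + \<delta> / 4"
      define b1 where "b1 = a + 3 * \<delta> / 4"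
      have ab1: "a1 < b1" "a < a1" "b1 < a + \<delta>" using \<delta> by (auto simp: a1_def b1_def)
      have sub: "{a1..b1} \<subseteq> {a0..R}" using ab1 aa0 aR' by auto
      have sub0: "{a0..R} \<subseteq> {0..R}" using a0 by auto
      have nz: "\<forall>t\<in>{a1..b1}. u t \<noteq> 0"
      proof
        fix t assume t: "t \<in> {a1..b1}"
        hence "t \<in> {a0 + real j * \<delta> <..< a0 + (real j + 1) * \<delta>}" using ab1
          by (auto simp: a_def algebra_simps)
        moreover have "t \<in> {0<..<R}" using t ab1 aa0 aR' a0 by auto
        ultimately show "u t \<noteq> 0" using j(2) by blast
      qed
      have sub': "{a1..b1} \<subseteq> {0..R}" using sub sub0 by (rule order_trans)
      have uc1: "continuous_on {a1..b1} u" using continuous_on_subset[OF ucont sub'] .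
      obtain s where s: "s \<in> {1, -1::real}" "\<forall>t\<in>{a1..b1}. s * u t > 0"
        using sign_const[OF uc1 less_imp_le[OF ab1(1)] nz] by blast
      have s2: "s * s = 1" "\<bar>s\<bar> = 1" using s(1) by auto
      define k0 where "k0 = (\<lambda>t. t ^ (N - 1) * f (t - 1 / real n) (u t))"
      have k0cont: "continuous_on {1 / real n..R} k0"
      proof -
        have c1: "continuous_on {1 / real n..R} (\<lambda>t. (t - 1 / real n, u t))"
          using ucont npos by (intro continuous_intros continuous_on_subset[OF ucont]) auto
        have img: "(\<lambda>t. (t - 1 / real n, u t)) ` {1 / real n..R} \<subseteq> {0..R} \<times> {s. ereal \<bar>s\<bar> < alpha}"
        proof
          fix p assume "p \<in> (\<lambda>t. (t - 1 / real n, u t)) ` {1 / real n..R}"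
          then obtain t where t: "t \<in> {1 / real n..R}" "p = (t - 1 / real n, u t)" by auto
          have t0: "0 \<le> t" using t(1) npos by (meson atLeastAtMost_iff order_trans)
          have "\<bar>u t\<bar> < b" using absu[of t] t t0 by auto
          hence "\<bar>u t\<bar> < R" using b by linarith
          hence "ereal \<bar>u t\<bar> < ereal R" by simp
          hence "ereal \<bar>u t\<bar> < alpha" using aR by (rule less_trans)
          moreover have "t - 1 / real n \<le> R"
          proof -
            have "t - x \<le> R" if "0 \<le> x" for x :: real using that t(1) by auto
            thus ?thesis by simp
          qed
          ultimately show "p \<in> {0..R} \<times> {s. ereal \<bar>s\<bar> < alpha}" using t by auto
        qed
        have "continuous_on {1 / real n..R} (\<lambda>t. (\<lambda>(r, s). f r s) (t - 1 / real n, u t))"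
          by (rule continuous_on_compose2[OF fcont c1 img])
        hence "continuous_on {1 / real n..R} (\<lambda>t. f (t - 1 / real n) (u t))" by simp
        thus ?thesis unfolding k0_def by (intro continuous_intros)
      qed
      have hint1: "h integrable_on {0..1 / real n}"
      proof -
        have "((\<lambda>t. 0::real) has_integral 0) {0..1 / real n}" by simp
        hence "(h has_integral 0) {0..1 / real n}"
          by (rule has_integral_eq[rotated]) (auto simp: h_def gn_def)
        thus ?thesis by blast
      qed
      have k0int: "k0 integrable_on {1 / real n..R}" by (rule integrable_continuous_real[OF k0cont])
      have hint2: "h integrable_on {1 / real n..R}"
        by (rule integrable_spike_finite[of "{1 / real n}" _ _ k0, OF _ _ k0int])
           (auto simp: h_def k0_def gn_def)
      have nR': "1 / real n \<le> R" using nR by (rule less_imp_le)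
      have hint: "h integrable_on {0..R}"
        by (rule Henstock_Kurzweil_Integration.integrable_combine[OF npos nR' hint1 hint2])
      have Fdiff: "integral {0..y} h - integral {0..x} h = integral {x..y} h"
        if "0 \<le> x" "x \<le> y" "y \<le> R" for x y
      proof -
        have "h integrable_on {0..y}" using integrable_subinterval_real[OF hint] that by auto
        from Henstock_Kurzweil_Integration.integral_combine[OF that(1,2) this] show ?thesis by simp
      qed
      define v where "v = (\<lambda>t. s * u t)"
      define v' where "v' = (\<lambda>t. s * u' t)"
      define w where "w = (\<lambda>t. t ^ (N - 1) * phi1 (v' t))"
      have phis: "phi1 (s * x) = s * phi1 x" for x using s(1) phi1_minus[of x] by auto
      have weq: "w r = - lam * s * integral {0..r} h" if "r \<in> {0..R}" for r
      proof -
        have "w r = s * (r ^ (N - 1) * phi1 (u' r))" by (simp add: w_def v'_def phis)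
        also have "\<dots> = s * (- lam * integral {0..r} h)" using eq that by (simp add: h_def)
        finally show ?thesis by simp
      qed
      have hbound: "s * h t \<ge> \<rho>0 * M * c" if "t \<in> {a0..R}" "0 \<le> c" "c \<le> v t" for t c
      proof -
        have t1: "t > 1 / real n" using that nle by auto
        define r where "r = t - 1 / real n"
        have r1: "0 \<le> r" using t1 by (simp add: r_def)
        have "t \<le> R" using that(1) by simp
        hence r2: "r \<le> R" unfolding r_def by (rule sub_le[OF npos])
        have r: "r \<in> {0..R}" using r1 r2 by simp
        have g: "gn f n t (u t) = f r (u t)" using t1 by (simp add: gn_def r_def)
        have ut: "\<bar>u t\<bar> < b" using absu that sub0 by auto
        have sf: "s * f r (u t) \<ge> M * c"
        proof (cases "u t = 0")
          case True
          hence "c = 0" using that by (simp add: v_def)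
          thus ?thesis using True f0 r by simp
        next
          case False
          have fm: "f r (u t) / phi1 (u t) \<ge> M" using e(2) r False ut b by auto
          have vt: "v t > 0" "v t < 1" using that False s(1) ut b by (auto simp: v_def)
          have "phi1 (v t) \<ge> v t" using phi1_ge_id vt by auto
          have pv: "phi1 (v t) > 0" using phi1_pos vt by auto
          have "s * f r (u t) \<ge> M * phi1 (v t)"
          proof (cases "s = 1")
            case True
            hence "phi1 (u t) > 0" using pv by (simp add: v_def)
            thus ?thesis using fm True by (simp add: v_def pos_le_divide_eq)
          next
            case sneg: False
            hence sm: "s = -1" using s(1) by auto
            hence "phi1 (u t) < 0" using pv phi1_minus[of "u t"] by (simp add: v_def)
            hence "f r (u t) \<le> M * phi1 (u t)" using fm by (simp add: neg_le_divide_eq)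
            thus ?thesis using sm phi1_minus[of "u t"] by (simp add: v_def)
          qed
          moreover have "M * phi1 (v t) \<ge> M * c"
            using \<open>phi1 (v t) \<ge> v t\<close> that Mpos by (simp add: mult_left_mono)
          ultimately show ?thesis by simp
        qed
        have tp: "t ^ (N - 1) \<ge> \<rho>0" unfolding \<rho>0_def using that a0 by (intro power_mono) auto
        have "\<rho>0 * (M * c) \<le> t ^ (N - 1) * (s * f r (u t))"
        proof (rule mult_mono[OF tp sf])
          show "0 \<le> t ^ (N - 1)" using tp \<rho> by linarith
          show "0 \<le> M * c" using Mpos that(2) by simp
        qed
        thus ?thesis by (simp add: h_def g algebra_simps)
      qed
      have H1: "\<forall>x y c. a1 \<le> x \<and> x \<le> y \<and> y \<le> b1 \<and> 0 \<le> c \<and> (\<forall>t\<in>{x..y}. c \<le> v t)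
              \<longrightarrow> w y \<le> w x - L * (y - x) * c"
      proof (intro allI impI)
        fix x y c assume xy: "a1 \<le> x \<and> x \<le> y \<and> y \<le> b1 \<and> 0 \<le> c \<and> (\<forall>t\<in>{x..y}. c \<le> v t)"
        have xyR: "{x..y} \<subseteq> {a0..R}" using xy sub by auto
        have hi: "h integrable_on {x..y}" using integrable_subinterval_real[OF hint] xyR sub0 by auto
        have ci: "(\<lambda>t. \<rho>0 * M * c) integrable_on {x..y}" by (rule integrable_const_ivl)
        have shi: "(\<lambda>t. s * h t) integrable_on {x..y}" using hi by (rule integrable_on_mult_right)
        have pw: "\<rho>0 * M * c \<le> s * h t" if "t \<in> {x..y}" for t
        proof -
          have "t \<in> {a0..R}" using that xyR by blast
          moreover have "c \<le> v t" using xy that by blast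
          ultimately show ?thesis using hbound[of t c] xy by blast
        qed
        have I0: "integral {x..y} (\<lambda>t. \<rho>0 * M * c) \<le> integral {x..y} (\<lambda>t. s * h t)"
          by (rule integral_le[OF ci shi pw])
        have e1: "integral {x..y} (\<lambda>t. \<rho>0 * M * c) = (y - x) * (\<rho>0 * M * c)"
          using xy by simp
        have e2: "integral {x..y} (\<lambda>t. s * h t) = s * integral {x..y} h" by simp
        have I: "(y - x) * (\<rho>0 * M * c) \<le> s * integral {x..y} h" using I0 unfolding e1 e2 .
        have "w y - w x = - lam * s * (integral {0..y} h - integral {0..x} h)"
          using weq[of x] weq[of y] xy xyR a0 by (auto simp: algebra_simps)
        also have "\<dots> = - lam * (s * integral {x..y} h)" using Fdiff[of x y] xy xyR a0 by auto
        also have "\<dots> \<le> - lam * ((y - x) * (\<rho>0 * M * c))" using I lam by simp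
        finally show "w y \<le> w x - L * (y - x) * c" by (simp add: L_def algebra_simps)
      qed
      define c0 where "c0 = (a1 + b1) / 2"
      have c0: "a1 < c0" "c0 < b1" "b1 - c0 = ll" "c0 - a1 = ll" using ab1
        by (auto simp: c0_def ll_def a1_def b1_def field_simps)
      have der1: "\<forall>z\<in>{a1..b1}. (u has_real_derivative u' z) (at z within {a1..b1})"
      proof
        fix z assume z: "z \<in> {a1..b1}"
        hence "(u has_real_derivative u' z) (at z within {0..R})" using der sub' by blast
        thus "(u has_real_derivative u' z) (at z within {a1..b1})" using sub' by (rule DERIV_subset)
      qed
      have vder: "\<forall>r\<in>{a1..b1}. (v has_real_derivative v' r) (at r within {a1..b1})"
      proof
        fix r assume "r \<in> {a1..b1}"
        hence "(u has_real_derivative u' r) (at r within {a1..b1})" using der1 by blast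
        from DERIV_cmult[OF this, of s] show "(v has_real_derivative v' r) (at r within {a1..b1})"
          unfolding v_def v'_def .
      qed
      have vrho: "\<forall>r\<in>{a1..b1}. 0 < r ^ (N - 1) \<and> r ^ (N - 1) \<le> \<rho>1"
      proof
        fix r assume "r \<in> {a1..b1}"
        hence r: "a0 \<le> r" "r \<le> R" using sub by auto
        hence "0 < r" using a0 by linarith
        thus "0 < r ^ (N - 1) \<and> r ^ (N - 1) \<le> \<rho>1" unfolding \<rho>1_def using r by (simp add: power_mono)
      qed
      have v'1: "\<forall>r\<in>{a1..b1}. \<bar>v' r\<bar> < 1"
      proof
        fix r assume "r \<in> {a1..b1}"
        hence "\<bar>u' r\<bar> < 1" using u'1 sub' by blast
        thus "\<bar>v' r\<bar> < 1" using s2 by (simp add: v'_def abs_mult)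
      qed
      have vb: "\<forall>r\<in>{a1..b1}. 0 < v r \<and> v r \<le> b"
      proof
        fix r assume r: "r \<in> {a1..b1}"
        hence "\<bar>u r\<bar> < b" using absu sub' by blast
        moreover have "v r \<le> \<bar>v r\<bar>" by simp
        ultimately show "0 < v r \<and> v r \<le> b" using s(2) r s2 by (simp add: v_def abs_mult)
      qed
      have Hc: "\<forall>x y c. x0 \<le> x \<and> x \<le> y \<and> y \<le> y0 \<and> 0 \<le> c \<and> (\<forall>t\<in>{x..y}. c \<le> v t)
              \<longrightarrow> w y \<le> w x - L * (y - x) * c" if "a1 \<le> x0" "y0 \<le> b1" for x0 y0
      proof (intro allI impI)
        fix x y c assume "x0 \<le> x \<and> x \<le> y \<and> y \<le> y0 \<and> 0 \<le> c \<and> (\<forall>t\<in>{x..y}. c \<le> v t)"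
        hence "a1 \<le> x \<and> x \<le> y \<and> y \<le> b1 \<and> 0 \<le> c \<and> (\<forall>t\<in>{x..y}. c \<le> v t)" using that by auto
        thus "w y \<le> w x - L * (y - x) * c" using H1 by blast
      qed
      have wd: "\<forall>r\<in>{x0..y0}. w r = r ^ (N - 1) * phi1 (v' r)" for x0 y0 by (simp add: w_def)
      have restr: "\<forall>r\<in>{x0..y0}. P r" if "\<forall>r\<in>{a1..b1}. P r" "a1 \<le> x0" "y0 \<le> b1" for P x0 y0
        using that by auto
      have c0a: "a1 \<le> c0" "c0 \<le> b1" using c0 by auto
      have LL1: "L * (b1 - c0)^2 > 8 * \<rho>1" "L * (c0 - a1)^2 > 8 * \<rho>1" using LL c0 by simp_all
      have bb: "b < (b1 - c0) / 4" "b < (c0 - a1) / 4" using b c0 by simp_all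
      show False
      proof (cases "w c0 \<le> 0")
        case True
        show False
          by (rule core_dec[OF c0(2) der_sub[OF vder c0a(1) order_refl] restr[OF vrho c0a(1) order_refl]
                wd restr[OF v'1 c0a(1) order_refl] restr[OF vb c0a(1) order_refl]
                Hc[OF c0a(1) order_refl] True bb(1) LL1(1)])
      next
        case False
        hence F: "w c0 \<ge> 0" by simp
        show False
          by (rule core_inc[OF c0(1) der_sub[OF vder order_refl c0a(2)] restr[OF vrho order_refl c0a(2)]
                wd restr[OF v'1 order_refl c0a(2)] restr[OF vb order_refl c0a(2)]
                Hc[OF order_refl c0a(2)] F bb(2) LL1(2)])
      qed
    qed
  qed
qed

end
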